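(* Let $n\ge3$ and let $a$ be an integer with $0\le a\le n-1$. The unidirectional cycle $\overrightarrow{C_n}$ is $D$-antimagic for each of the following sets $D$: (1) $D=\{a,(a+1)\bmod n\}$; (2) $D=\{a,(a+2)\bmod n\}$, provided $n\neq4$; (3) $D=\{a,(a+3)\bmod n\}$, provided $n\ge4$ and $n\neq6$; (4) $D=\{0,1,\dots,n-1\}\setminus\{a,(a+1)\bmod n\}$; (5) $D=\{0,1,\dots,n-1\}\setminus\{a,(a+2)\bmod n\}$, provided $n\neq4$; (6) $D=\{0,1,\dots,n-1\}\setminus\{a,(a+3)\bmod n\}$, provided $n\ge4$ and $n\neq6$. (In cases (4)–(6) it is assumed that $D$ is nonempty.)
   Context: An oriented graph is a simple graph each of whose edges is given one direction. For vertices $u,v$, $d(u,v)$ is the length of a shortest directed path from $u$ to $v$ ($d(u,u)=0$). For a set $D$ of nonnegative integers, $N_D(v)=\{y : d(v,y)\in D\}$; for a bijection $f:V\to\{1,\dots,|V|\}$, $\omega_D(v)=\sum_{x\in N_D(v)}f(x)$ (empty sum $0$); $f$ is $D$-antimagic if distinct vertices have distinct $D$-weights, and the graph is $D$-antimagic if such an $f$ exists. The unidirectional cycle $\overrightarrow{C_n}$ ($n\ge3$) has vertices $v_1,\dots,v_n$ and arcs $(v_i,v_{i+1})$ for $1\le i\le n-1$ and $(v_n,v_1)$; $d(v_i,v_j)=(j-i)\bmod n$. *)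

theory Defs
  imports Main
begin

definition nbhd :: "('v \<Rightarrow> 'v \<Rightarrow> nat) \<Rightarrow> 'v set \<Rightarrow> nat set \<Rightarrow> 'v \<Rightarrow> 'v set" where
  "nbhd dist V D v = {y \<in> V. dist v y \<in> D}"

definition D_weight :: "('v \<Rightarrow> 'v \<Rightarrow> nat) \<Rightarrow> 'v set \<Rightarrow> nat set \<Rightarrow> ('v \<Rightarrow> nat) \<Rightarrow> 'v \<Rightarrow> nat" where
  "D_weight dist V D f v = (\<Sum>x\<in>nbhd dist V D v. f x)"

definition D_antimagic_labeling :: "('v \<Rightarrow> 'v \<Rightarrow> nat) \<Rightarrow> 'v set \<Rightarrow> nat set \<Rightarrow> ('v \<Rightarrow> nat) \<Rightarrow> bool" where
  "D_antimagic_labeling dist V D f \<longleftrightarrow>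
     bij_betw f V {1..card V} \<and> inj_on (D_weight dist V D f) V"

definition D_antimagic :: "('v \<Rightarrow> 'v \<Rightarrow> nat) \<Rightarrow> 'v set \<Rightarrow> nat set \<Rightarrow> bool" where
  "D_antimagic dist V D \<longleftrightarrow> (\<exists>f. D_antimagic_labeling dist V D f)"

(* Unidirectional cycle C_n: vertex v_{i+1} is represented by i \<in> {0..<n};
   d(v_i, v_j) = (j - i) mod n. *)
definition cyc_vertices :: "nat \<Rightarrow> nat set" where
  "cyc_vertices n = {0..<n}"

definition cyc_dist :: "nat \<Rightarrow> nat \<Rightarrow> nat \<Rightarrow> nat" where
  "cyc_dist n i j = nat ((int j - int i) mod int n)"

definition cycle_D_antimagic :: "nat \<Rightarrow> nat set \<Rightarrow> bool" where
  "cycle_D_antimagic n D = D_antimagic (cyc_dist n) (cyc_vertices n) D"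

end

theory Submission
  imports Defs
begin


lemma modsimp: "(x::nat) < n \<Longrightarrow> k < n \<Longrightarrow> (x+k) mod n = (if x+k<n then x+k else x+k-n)"
  by (simp add: mod_if)

lemma cd: assumes "i<n" "y<n" "d<n"
  shows "(cyc_dist n i y = d) = (y = (i+d) mod n)"
proof (cases "i \<le> y")
  case True
  then have "(int y - int i) mod int n = int y - int i" using assms by (simp add: mod_pos_pos_trivial)
  then have "cyc_dist n i y = y - i" unfolding cyc_dist_def using True by simp
  then show ?thesis using assms True by (auto simp: modsimp)
next
  case False
  have "(int y - int i) mod int n = (int y - int i + int n) mod int n" by simp
  also have "\<dots> = int y - int i + int n" using assms False by (intro mod_pos_pos_trivial) auto
  finally have "(int y - int i) mod int n = int y - int i + int n" .
  then have "cyc_dist n i y = y + n - i" unfolding cyc_dist_def using False by simp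
  then show ?thesis using assms False by (auto simp: modsimp)
qed

lemma cd_lt: "0 < n \<Longrightarrow> cyc_dist n i y < n"
  unfolding cyc_dist_def by (simp add: nat_less_iff)

lemma reduce:
  assumes n0: "0 < n" and k: "0 < k" "k < n" and a: "a < n"
    and bij: "bij_betw f {0..<n} {1..n}"
    and inj: "inj_on (\<lambda>j. f j + f ((j+k) mod n)) {0..<n}"
  shows "cycle_D_antimagic n {a, (a+k) mod n} \<and> cycle_D_antimagic n ({0..<n} - {a, (a+k) mod n})"
proof -
  define h where "h = (\<lambda>j. f j + f ((j+k) mod n))"
  define s where "s = (\<lambda>i. (i + a) mod n)"
  have sinj: "inj_on s {0..<n}"
  proof (rule inj_onI)
    fix x y assume "x \<in> {0..<n}" "y \<in> {0..<n}" "s x = s y"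
    then show "x = y" unfolding s_def using a by (auto simp: modsimp split: if_splits)
  qed
  have sr: "s i < n" for i unfolding s_def using n0 by simp
  have ne: "s i \<noteq> (s i + k) mod n" for i using sr[of i] k by (auto simp: modsimp)
  have nb: "nbhd (cyc_dist n) {0..<n} {a, (a+k) mod n} i = {s i, (s i + k) mod n}" if "i < n" for i
  proof -
    have "(i + (a + k) mod n) mod n = (s i + k) mod n" unfolding s_def by (simp add: mod_simps add.assoc)
    note e = this
    show ?thesis
    proof (rule set_eqI)
      fix x
      show "x \<in> nbhd (cyc_dist n) {0..<n} {a, (a+k) mod n} i \<longleftrightarrow> x \<in> {s i, (s i + k) mod n}"
      proof (cases "x < n")
        case True
        have 1: "cyc_dist n i x = a \<longleftrightarrow> x = s i" unfolding s_def using cd[OF that True a] .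
        have 2: "cyc_dist n i x = (a+k) mod n \<longleftrightarrow> x = (s i + k) mod n"
          using cd[OF that True, of "(a+k) mod n"] n0 e by simp
        show ?thesis unfolding nbhd_def using 1 2 True by auto
      qed (use sr n0 in \<open>auto simp: nbhd_def\<close>)
    qed
  qed
  have nb2: "nbhd (cyc_dist n) {0..<n} ({0..<n} - {a, (a+k) mod n}) i = {0..<n} - {s i, (s i + k) mod n}" if "i < n" for i
  proof -
    have "(i + (a + k) mod n) mod n = (s i + k) mod n" unfolding s_def by (simp add: mod_simps add.assoc)
    note e = this
    show ?thesis
    proof (rule set_eqI)
      fix x
      show "x \<in> nbhd (cyc_dist n) {0..<n} ({0..<n} - {a, (a+k) mod n}) i \<longleftrightarrow> x \<in> {0..<n} - {s i, (s i + k) mod n}"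
      proof (cases "x < n")
        case True
        have 1: "cyc_dist n i x = a \<longleftrightarrow> x = s i" unfolding s_def using cd[OF that True a] .
        have 2: "cyc_dist n i x = (a+k) mod n \<longleftrightarrow> x = (s i + k) mod n"
          using cd[OF that True, of "(a+k) mod n"] n0 e by simp
        show ?thesis unfolding nbhd_def using 1 2 True cd_lt[OF n0, of i x] by auto
      qed (auto simp: nbhd_def)
    qed
  qed
  have w1: "D_weight (cyc_dist n) {0..<n} {a, (a+k) mod n} f i = h (s i)" if "i < n" for i
    unfolding D_weight_def nb[OF that] h_def using ne[of i] by simp
  define S where "S = sum f {0..<n}"
  have Sh: "S = sum f ({0..<n} - {s i, (s i + k) mod n}) + h (s i)" for i
  proof -
    have "S = sum f ({0..<n} - {s i, (s i + k) mod n}) + sum f {s i, (s i + k) mod n}"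
      unfolding S_def by (rule sum.subset_diff) (use sr n0 in auto)
    then show ?thesis unfolding h_def using ne[of i] by simp
  qed
  have w2: "D_weight (cyc_dist n) {0..<n} ({0..<n} - {a, (a+k) mod n}) f i = S - h (s i)" if "i < n" for i
    unfolding D_weight_def nb2[OF that] using Sh[of i] by simp
  have hinj: "inj_on h {0..<n}" using inj unfolding h_def .
  have c: "card {0..<n} = n" by simp
  have A: "cycle_D_antimagic n {a, (a+k) mod n}"
    unfolding cycle_D_antimagic_def D_antimagic_def D_antimagic_labeling_def cyc_vertices_def
  proof (intro exI conjI)
    show "bij_betw f {0..<n} {1..card {0..<n}}" using bij by simp
    show "inj_on (D_weight (cyc_dist n) {0..<n} {a, (a + k) mod n} f) {0..<n}"
    proof (rule inj_onI)
      fix x y assume xy: "x \<in> {0..<n}" "y \<in> {0..<n}"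
        "D_weight (cyc_dist n) {0..<n} {a, (a + k) mod n} f x = D_weight (cyc_dist n) {0..<n} {a, (a + k) mod n} f y"
      then have "h (s x) = h (s y)" using w1 by simp
      then have "s x = s y" using hinj sr by (meson atLeastLessThan_iff inj_onD zero_le)
      then show "x = y" using sinj xy by (meson inj_onD)
    qed
  qed
  have B: "cycle_D_antimagic n ({0..<n} - {a, (a+k) mod n})"
    unfolding cycle_D_antimagic_def D_antimagic_def D_antimagic_labeling_def cyc_vertices_def
  proof (intro exI conjI)
    show "bij_betw f {0..<n} {1..card {0..<n}}" using bij by simp
    show "inj_on (D_weight (cyc_dist n) {0..<n} ({0..<n} - {a, (a + k) mod n}) f) {0..<n}"
    proof (rule inj_onI)
      fix x y assume xy: "x \<in> {0..<n}" "y \<in> {0..<n}"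
        "D_weight (cyc_dist n) {0..<n} ({0..<n} - {a, (a + k) mod n}) f x = D_weight (cyc_dist n) {0..<n} ({0..<n} - {a, (a + k) mod n}) f y"
      then have "S - h (s x) = S - h (s y)" using w2 by simp
      moreover have "h (s x) \<le> S" "h (s y) \<le> S" using Sh by (metis le_add2)+
      ultimately have "h (s x) = h (s y)" by simp
      then have "s x = s y" using hinj sr by (meson atLeastLessThan_iff inj_onD zero_le)
      then show "x = y" using sinj xy by (meson inj_onD)
    qed
  qed
  show ?thesis using A B by blast
qed


lemma bijI: fixes f :: "nat \<Rightarrow> nat" and n :: nat assumes "inj_on f {0..<n}" "\<And>j. j<n \<Longrightarrow> 1 \<le> f j \<and> f j \<le> n"
  shows "bij_betw f {0..<n} {1..n}"
proof -
  have sub: "f ` {0..<n} \<subseteq> {1..n}" using assms(2) by auto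
  have "card (f ` {0..<n}) = card {1..n}" using card_image[OF assms(1)] by simp

  then have "f ` {0..<n} = {1..n}" using sub by (intro card_subset_eq) auto
  then show ?thesis using assms(1) by (simp add: bij_betw_def)
qed
lemma listcase: fixes L :: "nat list" and n k :: nat assumes "length L = n" "distinct L" "set L = {1..n}"
  "distinct (map (\<lambda>j. L!j + L!((j+k) mod n)) [0..<n])"
  shows "\<exists>f::nat\<Rightarrow>nat. bij_betw f {0..<n} {1..n} \<and> inj_on (\<lambda>j. f j + f ((j+k) mod n)) {0..<n}"
proof (intro exI conjI)
  show "bij_betw ((!) L) {0..<n} {1..n}" using assms by (intro bij_betw_nth) auto
  show "inj_on (\<lambda>j. L!j + L!((j+k) mod n)) {0..<n}" using assms(4) by (simp add: distinct_map)
qed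


lemma c62: "\<exists>f::nat\<Rightarrow>nat. bij_betw f {0..<6} {1..6} \<and> inj_on (\<lambda>j. f j + f ((j+2) mod 6)) {0..<(6::nat)}"
  by (rule listcase[of "[1,3,2,5,4,6]"]) (simp_all add: upt_rec atLeastAtMost_def atLeast_def atMost_def, auto)


lemma c43: "\<exists>f::nat\<Rightarrow>nat. bij_betw f {0..<4} {1..4} \<and> inj_on (\<lambda>j. f j + f ((j+3) mod 4)) {0..<(4::nat)}"
  by (rule listcase[of "[1,2,4,3]"]) (simp_all add: upt_rec, auto)


lemma c83: "\<exists>f::nat\<Rightarrow>nat. bij_betw f {0..<8} {1..8} \<and> inj_on (\<lambda>j. f j + f ((j+3) mod 8)) {0..<(8::nat)}"
  by (rule listcase[of "[1,2,3,5,6,4,7,8]"]) (simp_all add: upt_rec, auto)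


lemma codd: fixes n k :: nat assumes "odd n" "0 < k" "k < n"
  shows "\<exists>f::nat\<Rightarrow>nat. bij_betw f {0..<n} {1..n} \<and> inj_on (\<lambda>j. f j + f ((j+k) mod n)) {0..<n}"
proof (intro exI conjI)
  show "bij_betw Suc {0..<n} {1..n}" by (intro bijI) auto
  obtain m where m: "n = 2*m+1" using assms(1) oddE by blast
  show "inj_on (\<lambda>j. Suc j + Suc ((j+k) mod n)) {0..<n}"
  proof (rule inj_onI)
    fix x y assume xy: "x \<in> {0..<n}" "y \<in> {0..<n}" and e: "Suc x + Suc ((x+k) mod n) = Suc y + Suc ((y+k) mod n)"
    have hx: "(x+k) mod n = (if x+k<n then x+k else x+k-n)" using xy assms by (intro modsimp) auto
    have hy: "(y+k) mod n = (if y+k<n then y+k else y+k-n)" using xy assms by (intro modsimp) auto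
    have e': "x + (if x+k<n then x+k else x+k-n) = y + (if y+k<n then y+k else y+k-n)"
      using e[unfolded hx hy] by simp
    show "x = y"
    proof (cases "x+k<n"; cases "y+k<n")
      assume "x+k<n" "\<not> y+k<n"
      with e' have "2*x + n = 2*y" by simp
      then have "n = 2*(y-x)" by simp
      then show ?thesis using assms(1) by simp
    next
      assume "\<not> x+k<n" "y+k<n"
      with e' have "2*y + n = 2*x" by simp
      then have "n = 2*(x-y)" by simp
      then show ?thesis using assms(1) by simp
    qed (use e' in auto)
  qed
qed



lemma ce1: fixes n :: nat assumes "even n" "4 \<le> n"
  shows "\<exists>f::nat\<Rightarrow>nat. bij_betw f {0..<n} {1..n} \<and> inj_on (\<lambda>j. f j + f ((j+1) mod n)) {0..<n}"
proof (intro exI conjI)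
  define f :: "nat \<Rightarrow> nat" where "f = (\<lambda>j. if j=0 then 2 else if j=1 then 1 else j+1)"
  show "bij_betw f {0..<n} {1..n}"
  proof (rule bijI)
    show "inj_on f {0..<n}"
    proof (rule inj_onI)
      fix x y assume "x \<in> {0..<n}" "y \<in> {0..<n}" and e: "f x = f y"
      have small: "x < 2 \<Longrightarrow> f x \<le> 2" for x
        by (cases "x=0 \<or> x=1") (auto simp: f_def)
      show "x = y"
      proof (cases "x < 2 \<and> y < 2")
        case True
        then have "x=0 \<or> x=1" "y=0 \<or> y=1" by auto
        then show ?thesis using e by (elim disjE) (simp_all add: f_def)
      next
        case False
        then show ?thesis using e small[of x] small[of y] by (auto simp: f_def split: if_splits)
      qed
    qed
    show "1 \<le> f j \<and> f j \<le> n" if "j < n" for j unfolding f_def using that assms by auto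
  qed
  obtain m where m: "n = 2*m" using assms(1) by blast
  define T :: "nat \<Rightarrow> nat" where "T = (\<lambda>j. if j=0 then 3 else 4)"
  have H: "f j + f ((j+1) mod n) = (if j < 2 then T j else if j+1 < n then 2*j+3 else 2*j+4-n)" if "j < n" for j
  proof -
    have hx: "(j+1) mod n = (if j+1<n then j+1 else j+1-n)" using that assms by (intro modsimp) auto
    show ?thesis
    proof (cases "j < 2")
      case True
      then have "j+1<n" using assms by simp
      moreover have "j=0 \<or> j=1" using True by auto
      ultimately show ?thesis unfolding hx using True by (auto simp: f_def T_def)
    next
      case False
      then have fj: "f j = j+1" by (simp add: f_def)
      show ?thesis
      proof (cases "j+1<n")
        case True
        then have "f (j+1) = j+2" using False by (simp add: f_def)
        then show ?thesis using fj True False hx by simp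
      next
        case c2: False
        then have r: "j+1-n < 1" using that by simp
        then have "f (j+1-n) = j+1-n+2" unfolding f_def by auto
        then show ?thesis using fj c2 False hx by simp
      qed
    qed
  qed
  have Tr: "3 \<le> T j \<and> T j \<le> 4" for j unfolding T_def by auto
  have Ti: "x < 2 \<Longrightarrow> y < 2 \<Longrightarrow> T x = T y \<Longrightarrow> x = y" for x y
  proof -
    assume "x < 2" "y < 2" "T x = T y"
    moreover have "x=0 \<or> x=1" "y=0 \<or> y=1" using \<open>x<2\<close> \<open>y<2\<close> by auto
    ultimately show "x = y" by (elim disjE) (simp_all add: T_def)
  qed
  show "inj_on (\<lambda>j. f j + f ((j+1) mod n)) {0..<n}"

  proof (rule inj_onI)
    fix x y assume xy: "x \<in> {0..<n}" "y \<in> {0..<n}" and e: "f x + f ((x+1) mod n) = f y + f ((y+1) mod n)"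
    have e': "(if x < 2 then T x else if x+1 < n then 2*x+3 else 2*x+4-n) = (if y < 2 then T y else if y+1 < n then 2*y+3 else 2*y+4-n)"
      using e H xy by simp
    have par: False if "2*a+3 = 2*b+4-n" "b+1 \<ge> n" "b < n" for a b
    proof -
      from that have "2*a + 3 + n = 2*b + 4" by simp
      then show False using m by presburger
    qed
    show "x = y"
    proof (cases "x < 2")
      case True
      then show ?thesis using e' Ti Tr[of x] Tr[of y] assms xy by (auto split: if_splits)
    next
      case False
      note x6 = this
      show ?thesis
      proof (cases "y < 2")
        case True
        then show ?thesis using e' x6 Tr[of y] assms xy by (auto split: if_splits)
      next
        case False
        then show ?thesis using e' x6 xy par[of x y] par[of y x] by (auto split: if_splits)
      qed
    qed
  qed
qed

lemma ce2: fixes n :: nat assumes "even n" "8 \<le> n"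
  shows "\<exists>f::nat\<Rightarrow>nat. bij_betw f {0..<n} {1..n} \<and> inj_on (\<lambda>j. f j + f ((j+2) mod n)) {0..<n}"
proof (intro exI conjI)
  define f :: "nat \<Rightarrow> nat" where "f = (\<lambda>j. if j=0 then 2 else if j=1 then 3 else if j=2 then 1 else j+1)"
  show "bij_betw f {0..<n} {1..n}"
  proof (rule bijI)
    show "inj_on f {0..<n}"
    proof (rule inj_onI)
      fix x y assume "x \<in> {0..<n}" "y \<in> {0..<n}" and e: "f x = f y"
      have small: "x < 3 \<Longrightarrow> f x \<le> 3" for x
        by (cases "x=0 \<or> x=1 \<or> x=2") (auto simp: f_def)
      show "x = y"
      proof (cases "x < 3 \<and> y < 3")
        case True
        then have "x=0 \<or> x=1 \<or> x=2" "y=0 \<or> y=1 \<or> y=2" by auto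
        then show ?thesis using e by (elim disjE) (simp_all add: f_def)
      next
        case False
        then show ?thesis using e small[of x] small[of y] by (auto simp: f_def split: if_splits)
      qed
    qed
    show "1 \<le> f j \<and> f j \<le> n" if "j < n" for j unfolding f_def using that assms by auto
  qed
  obtain m where m: "n = 2*m" using assms(1) by blast
  define T :: "nat \<Rightarrow> nat" where "T = (\<lambda>j. if j=0 then 3 else if j=1 then 7 else 6)"
  have H: "f j + f ((j+2) mod n) = (if j < 3 then T j else if j+2 < n then 2*j+4 else 2*j+5-n)" if "j < n" for j
  proof -
    have hx: "(j+2) mod n = (if j+2<n then j+2 else j+2-n)" using that assms by (intro modsimp) auto
    show ?thesis
    proof (cases "j < 3")
      case True
      then have "j+2<n" using assms by simp
      moreover have "j=0 \<or> j=1 \<or> j=2" using True by auto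
      ultimately show ?thesis unfolding hx using True by (auto simp: f_def T_def)
    next
      case False
      then have fj: "f j = j+1" by (simp add: f_def)
      show ?thesis
      proof (cases "j+2<n")
        case True
        then have "f (j+2) = j+3" using False by (simp add: f_def)
        then show ?thesis using fj True False hx by simp
      next
        case c2: False
        then have r: "j+2-n < 2" using that by simp
        then have "f (j+2-n) = j+2-n+2" unfolding f_def by auto
        then show ?thesis using fj c2 False hx by simp
      qed
    qed
  qed
  have Tr: "3 \<le> T j \<and> T j \<le> 7" for j unfolding T_def by auto
  have Ti: "x < 3 \<Longrightarrow> y < 3 \<Longrightarrow> T x = T y \<Longrightarrow> x = y" for x y
  proof -
    assume "x < 3" "y < 3" "T x = T y"
    moreover have "x=0 \<or> x=1 \<or> x=2" "y=0 \<or> y=1 \<or> y=2" using \<open>x<3\<close> \<open>y<3\<close> by auto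
    ultimately show "x = y" by (elim disjE) (simp_all add: T_def)
  qed
  show "inj_on (\<lambda>j. f j + f ((j+2) mod n)) {0..<n}"

  proof (rule inj_onI)
    fix x y assume xy: "x \<in> {0..<n}" "y \<in> {0..<n}" and e: "f x + f ((x+2) mod n) = f y + f ((y+2) mod n)"
    have e': "(if x < 3 then T x else if x+2 < n then 2*x+4 else 2*x+5-n) = (if y < 3 then T y else if y+2 < n then 2*y+4 else 2*y+5-n)"
      using e H xy by simp
    have par: False if "2*a+4 = 2*b+5-n" "b+2 \<ge> n" "b < n" for a b
    proof -
      from that have "2*a + 4 + n = 2*b + 5" by simp
      then show False using m by presburger
    qed
    show "x = y"
    proof (cases "x < 3")
      case True
      then show ?thesis using e' Ti Tr[of x] Tr[of y] assms xy by (auto split: if_splits)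
    next
      case False
      note x6 = this
      show ?thesis
      proof (cases "y < 3")
        case True
        then show ?thesis using e' x6 Tr[of y] assms xy by (auto split: if_splits)
      next
        case False
        then show ?thesis using e' x6 xy par[of x y] par[of y x] by (auto split: if_splits)
      qed
    qed
  qed
qed

lemma ce3: fixes n :: nat assumes "even n" "10 \<le> n"
  shows "\<exists>f::nat\<Rightarrow>nat. bij_betw f {0..<n} {1..n} \<and> inj_on (\<lambda>j. f j + f ((j+3) mod n)) {0..<n}"
proof (intro exI conjI)
  define f :: "nat \<Rightarrow> nat" where "f = (\<lambda>j. if j=0 then 4 else if j=1 then 5 else if j=2 then 6 else if j=3 then 2 else if j=4 then 3 else if j=5 then 1 else j+1)"
  show "bij_betw f {0..<n} {1..n}"
  proof (rule bijI)
    show "inj_on f {0..<n}"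
    proof (rule inj_onI)
      fix x y assume "x \<in> {0..<n}" "y \<in> {0..<n}" and e: "f x = f y"
      have small: "x < 6 \<Longrightarrow> f x \<le> 6" for x
        by (cases "x=0 \<or> x=1 \<or> x=2 \<or> x=3 \<or> x=4 \<or> x=5") (auto simp: f_def)
      show "x = y"
      proof (cases "x < 6 \<and> y < 6")
        case True
        then have "x=0 \<or> x=1 \<or> x=2 \<or> x=3 \<or> x=4 \<or> x=5" "y=0 \<or> y=1 \<or> y=2 \<or> y=3 \<or> y=4 \<or> y=5" by auto
        then show ?thesis using e by (elim disjE) (simp_all add: f_def)
      next
        case False
        then show ?thesis using e small[of x] small[of y] by (auto simp: f_def split: if_splits)
      qed
    qed
    show "1 \<le> f j \<and> f j \<le> n" if "j < n" for j unfolding f_def using that assms by auto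
  qed
  obtain m where m: "n = 2*m" using assms(1) by blast
  define T :: "nat \<Rightarrow> nat" where "T = (\<lambda>j. if j=0 then 6 else if j=1 then 8 else if j=2 then 7 else if j=3 then 9 else if j=4 then 11 else 10)"
  have H: "f j + f ((j+3) mod n) = (if j < 6 then T j else if j+3 < n then 2*j+5 else 2*j+8-n)" if "j < n" for j
  proof -
    have hx: "(j+3) mod n = (if j+3<n then j+3 else j+3-n)" using that assms by (intro modsimp) auto
    show ?thesis
    proof (cases "j < 6")
      case True
      then have "j+3<n" using assms by simp
      moreover have "j=0 \<or> j=1 \<or> j=2 \<or> j=3 \<or> j=4 \<or> j=5" using True by auto
      ultimately show ?thesis unfolding hx using True by (auto simp: f_def T_def)
    next
      case False
      then have fj: "f j = j+1" by (simp add: f_def)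
      show ?thesis
      proof (cases "j+3<n")
        case True
        then have "f (j+3) = j+4" using False by (simp add: f_def)
        then show ?thesis using fj True False hx by simp
      next
        case c2: False
        then have r: "j+3-n < 3" using that by simp
        then have "f (j+3-n) = j+3-n+4" unfolding f_def by auto
        then show ?thesis using fj c2 False hx by simp
      qed
    qed
  qed
  have Tr: "6 \<le> T j \<and> T j \<le> 11" for j unfolding T_def by auto
  have Ti: "x < 6 \<Longrightarrow> y < 6 \<Longrightarrow> T x = T y \<Longrightarrow> x = y" for x y
  proof -
    assume "x < 6" "y < 6" "T x = T y"
    moreover have "x=0 \<or> x=1 \<or> x=2 \<or> x=3 \<or> x=4 \<or> x=5" "y=0 \<or> y=1 \<or> y=2 \<or> y=3 \<or> y=4 \<or> y=5" using \<open>x<6\<close> \<open>y<6\<close> by auto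
    ultimately show "x = y" by (elim disjE) (simp_all add: T_def)
  qed
  show "inj_on (\<lambda>j. f j + f ((j+3) mod n)) {0..<n}"

  proof (rule inj_onI)
    fix x y assume xy: "x \<in> {0..<n}" "y \<in> {0..<n}" and e: "f x + f ((x+3) mod n) = f y + f ((y+3) mod n)"
    have e': "(if x < 6 then T x else if x+3 < n then 2*x+5 else 2*x+8-n) = (if y < 6 then T y else if y+3 < n then 2*y+5 else 2*y+8-n)"
      using e H xy by simp
    have par: False if "2*a+5 = 2*b+8-n" "b+3 \<ge> n" "b < n" for a b
    proof -
      from that have "2*a + 5 + n = 2*b + 8" by simp
      then show False using m by presburger
    qed
    show "x = y"
    proof (cases "x < 6")
      case True
      then show ?thesis using e' Ti Tr[of x] Tr[of y] assms xy by (auto split: if_splits)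
    next
      case False
      note x6 = this
      show ?thesis
      proof (cases "y < 6")
        case True
        then show ?thesis using e' x6 Tr[of y] assms xy by (auto split: if_splits)
      next
        case False
        then show ?thesis using e' x6 xy par[of x y] par[of y x] by (auto split: if_splits)
      qed
    qed
  qed
qed


lemma ex1: fixes n :: nat assumes "3 \<le> n"
  shows "\<exists>f::nat\<Rightarrow>nat. bij_betw f {0..<n} {1..n} \<and> inj_on (\<lambda>j. f j + f ((j+1) mod n)) {0..<n}"
proof (cases "even n")
  case True then show ?thesis using assms ce1[of n] by (cases "n = 3") auto
next
  case False then show ?thesis using assms codd[of n 1] by auto
qed

lemma ex2: fixes n :: nat assumes "3 \<le> n" "n \<noteq> 4"
  shows "\<exists>f::nat\<Rightarrow>nat. bij_betw f {0..<n} {1..n} \<and> inj_on (\<lambda>j. f j + f ((j+2) mod n)) {0..<n}"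
proof (cases "even n")
  case True
  then have "n = 6 \<or> 8 \<le> n" using assms by presburger
  then show ?thesis using True ce2[of n] c62 by auto
next
  case False then show ?thesis using assms codd[of n 2] by auto
qed

lemma ex3: fixes n :: nat assumes "4 \<le> n" "n \<noteq> 6"
  shows "\<exists>f::nat\<Rightarrow>nat. bij_betw f {0..<n} {1..n} \<and> inj_on (\<lambda>j. f j + f ((j+3) mod n)) {0..<n}"
proof (cases "even n")
  case True
  then have "n = 4 \<or> n = 8 \<or> 10 \<le> n" using assms by presburger
  then show ?thesis using True ce3[of n] c43 c83 by auto
next
  case False then show ?thesis using assms codd[of n 3] by auto
qed

theorem mainTheorem14:
  fixes n a :: nat
  assumes "n \<ge> 3" and "a \<le> n - 1"
  shows "cycle_D_antimagic n {a, (a + 1) mod n}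
    \<and> (n \<noteq> 4 \<longrightarrow> cycle_D_antimagic n {a, (a + 2) mod n})
    \<and> (n \<ge> 4 \<and> n \<noteq> 6 \<longrightarrow> cycle_D_antimagic n {a, (a + 3) mod n})
    \<and> ({0..<n} - {a, (a + 1) mod n} \<noteq> {} \<longrightarrow>
           cycle_D_antimagic n ({0..<n} - {a, (a + 1) mod n}))
    \<and> (n \<noteq> 4 \<and> {0..<n} - {a, (a + 2) mod n} \<noteq> {} \<longrightarrow>
           cycle_D_antimagic n ({0..<n} - {a, (a + 2) mod n}))
    \<and> (n \<ge> 4 \<and> n \<noteq> 6 \<and> {0..<n} - {a, (a + 3) mod n} \<noteq> {} \<longrightarrow>
           cycle_D_antimagic n ({0..<n} - {a, (a + 3) mod n}))"
proof -
  have a: "a < n" using assms by simp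
  have n0: "0 < n" using assms by simp
  have R1: "cycle_D_antimagic n {a, (a+1) mod n} \<and> cycle_D_antimagic n ({0..<n} - {a, (a+1) mod n})"
  proof -
    obtain f where fb: "bij_betw f {0..<n} {1..n}" and fi: "inj_on (\<lambda>j. f j + f ((j+1) mod n)) {0..<n}"
      using ex1[OF assms(1)] by blast
    then show ?thesis using reduce[OF n0 _ _ a fb fi] assms by simp
  qed
  have R2: "cycle_D_antimagic n {a, (a+2) mod n} \<and> cycle_D_antimagic n ({0..<n} - {a, (a+2) mod n})" if n4: "n \<noteq> 4"
  proof -
    obtain f where fb: "bij_betw f {0..<n} {1..n}" and fi: "inj_on (\<lambda>j. f j + f ((j+2) mod n)) {0..<n}"
      using ex2[OF assms(1) n4] by blast
    then show ?thesis using reduce[OF n0 _ _ a fb fi] assms by simp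
  qed
  have R3: "cycle_D_antimagic n {a, (a+3) mod n} \<and> cycle_D_antimagic n ({0..<n} - {a, (a+3) mod n})" if n46: "4 \<le> n" "n \<noteq> 6"
  proof -
    obtain f where fb: "bij_betw f {0..<n} {1..n}" and fi: "inj_on (\<lambda>j. f j + f ((j+3) mod n)) {0..<n}"
      using ex3[OF n46] by blast
    then show ?thesis using reduce[OF n0 _ _ a fb fi] n46 by simp
  qed
  show ?thesis using R1 R2 R3 by blast
qed

end
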